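(* Let $n\ge2$ and let $N$ be a monoid containing elements $s_1,\dots,s_{n-1},a$ satisfying $s_i^2=1$, $(s_is_{i+1})^3=1$ for $1\le i\le n-2$, $(s_is_j)^2=1$ for $|i-j|\ge2$, and $s_ia=as_i$ for $2\le i\le n-1$. Define $\alpha_1=a$ and $\alpha_j=(s_{j-1}\cdots s_1)a(s_1\cdots s_{j-1})$ for $2\le j\le n$, and for $1\le i\le n-1$, $1\le j\le n$ let $\alpha_j^{s_i}=\alpha_{j-1}$ if $i=j-1$, $\alpha_j^{s_i}=\alpha_{j+1}$ if $i=j$, and $\alpha_j^{s_i}=\alpha_j$ otherwise. Then $s_i\alpha_j=\alpha_j^{s_i}s_i$ in $N$ for all $1\le i\le n-1$ and $1\le j\le n$. *)

theory Defs
  imports Main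
begin

definition alpha :: "(nat \<Rightarrow> 'a::monoid_mult) \<Rightarrow> 'a \<Rightarrow> nat \<Rightarrow> 'a" where
  "alpha s a j = prod_list (map s (rev [1..<j])) * a * prod_list (map s [1..<j])"

definition alpha_act :: "(nat \<Rightarrow> 'a::monoid_mult) \<Rightarrow> 'a \<Rightarrow> nat \<Rightarrow> nat \<Rightarrow> 'a" where
  "alpha_act s a i j = (if i = j - 1 then alpha s a (j - 1)
                        else if i = j then alpha s a (j + 1)
                        else alpha s a j)"

end

theory Submission
  imports Defs
begin

lemma comm_prod:
  fixes x :: "'a::monoid_mult"
  assumes "\<And>k. k \<in> set xs \<Longrightarrow> x * s k = s k * x"
  shows "x * prod_list (map s xs) = prod_list (map s xs) * x"
  using assms
proof (induction xs)
  case Nil then show ?case by simp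
next
  case (Cons y ys)
  have "x * prod_list (map s (y # ys)) = (x * s y) * prod_list (map s ys)"
    by (simp add: mult.assoc)
  also have "\<dots> = s y * (x * prod_list (map s ys))" using Cons by (simp add: mult.assoc)
  also have "\<dots> = prod_list (map s (y # ys)) * x" using Cons by (simp add: mult.assoc)
  finally show ?case .
qed

lemma split_upt:
  assumes "1 \<le> i" "i + 2 \<le> j"
  shows "[1..<j] = [1..<i] @ [i, i+1] @ [i+2..<j]"
proof -
  have "[1..<j] = [1..<i] @ [i..<j]" using assms by (metis le_add1 le_trans one_add_one upt_add_eq_append le_add_diff_inverse add_le_imp_le_left)
  moreover have "[i..<j] = [i, i+1] @ [i+2..<j]" using assms
    by (simp add: upt_conv_Cons)
  ultimately show ?thesis by simp
qed

theorem lemma3: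
  fixes n :: nat and s :: "nat \<Rightarrow> 'a::monoid_mult" and a :: 'a
  assumes "n \<ge> 2"
    and "\<And>i. 1 \<le> i \<Longrightarrow> i \<le> n - 1 \<Longrightarrow> s i * s i = 1"
    and "\<And>i. 1 \<le> i \<Longrightarrow> i \<le> n - 2 \<Longrightarrow> (s i * s (i + 1)) ^ 3 = 1"
    and "\<And>i j. 1 \<le> i \<Longrightarrow> i \<le> n - 1 \<Longrightarrow> 1 \<le> j \<Longrightarrow> j \<le> n - 1 \<Longrightarrow>
            (i \<ge> j + 2 \<or> j \<ge> i + 2) \<Longrightarrow> (s i * s j) ^ 2 = 1"
    and "\<And>i. 2 \<le> i \<Longrightarrow> i \<le> n - 1 \<Longrightarrow> s i * a = a * s i"
  shows "\<forall>i j. 1 \<le> i \<and> i \<le> n - 1 \<and> 1 \<le> j \<and> j \<le> n \<longrightarrow>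
           s i * alpha s a j = alpha_act s a i j * s i"
proof (intro allI impI)
  fix i j assume ij: "1 \<le> i \<and> i \<le> n - 1 \<and> 1 \<le> j \<and> j \<le> n"
  define P where "P j = prod_list (map s (rev [1..<j]))" for j
  define Q where "Q j = prod_list (map s [1..<j])" for j
  have al: "alpha s a j = P j * a * Q j" for j by (simp add: alpha_def P_def Q_def)
  have PS: "P (Suc k) = s k * P k" if "1 \<le> k" for k using that by (simp add: P_def)
  have QS: "Q (Suc k) = Q k * s k" if "1 \<le> k" for k using that by (simp add: Q_def)
  have comm: "s k * s l = s l * s k" if "1 \<le> k" "k \<le> n - 1" "1 \<le> l" "l \<le> n - 1"
    "k \<ge> l + 2 \<or> l \<ge> k + 2" for k l
  proof -
    have sq: "s k * s l * s k * s l = 1" using assms(4)[OF that] by (simp add: power2_eq_square mult.assoc)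
    have "s k * s l = s k * s l * (s k * s l * s l * s k)"
      using assms(2)[of k] assms(2)[of l] that by (simp add: mult.assoc)
    also have "\<dots> = (s k * s l * s k * s l) * s l * s k" by (simp add: mult.assoc)
    finally show ?thesis using sq by simp
  qed
  have braid: "s k * s (k+1) * s k = s (k+1) * s k * s (k+1)" if "1 \<le> k" "k + 1 \<le> n - 1" for k
  proof -
    have c: "s k * s (k+1) * s k * s (k+1) * s k * s (k+1) = 1"
      using assms(3)[of k] that by (simp add: numeral_3_eq_3 mult.assoc)
    have "s k * s (k+1) * s k = s k * s (k+1) * s k * (s (k+1) * s k * s (k+1) * s (k+1) * s k * s (k+1))"
      using assms(2)[of k] assms(2)[of "k+1"] that by (simp add: mult.assoc)
    also have "\<dots> = (s k * s (k+1) * s k * s (k+1) * s k * s (k+1)) * s (k+1) * s k * s (k+1)"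
      by (simp add: mult.assoc)
    finally show ?thesis using c by simp
  qed
  consider "i = j - 1" "j \<ge> 2" | "i = j" | "i \<ge> j + 1" | "i + 2 \<le> j" using ij by linarith
  then show "s i * alpha s a j = alpha_act s a i j * s i"
  proof cases
    case 1
    then obtain k where k: "j = Suc k" "i = k" "1 \<le> k" by (cases j) auto
    have "s i * alpha s a j = (s k * s k) * P k * a * Q k * s k"
      using k by (simp add: al PS QS mult.assoc)
    also have "\<dots> = P k * a * Q k * s k" using assms(2)[of k] k ij by simp
    finally show ?thesis using k by (simp add: alpha_act_def al)
  next
    case 2
    have aa: "alpha_act s a i j = alpha s a (Suc j)" proof -
      have "j \<noteq> j - 1" using ij 2 by linarith
      then show ?thesis using 2 by (simp add: alpha_act_def)
    qed
    have "alpha_act s a i j * s i = s j * P j * a * Q j * (s j * s j)"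
      using ij by (simp only: aa al PS QS PS[of j] QS[of j]) (simp add: 2 mult.assoc)
    also have "\<dots> = s j * P j * a * Q j" using assms(2)[of j] 2 ij by simp
    finally show ?thesis using 2 by (simp add: al mult.assoc)
  next
    case 3
    have ct: "s i * s k = s k * s i" if "k \<in> set [1..<j]" for k
      using that 3 ij by (intro comm) auto
    have cP: "s i * P j = P j * s i" unfolding P_def by (rule comm_prod) (use ct in auto)
    have cQ: "s i * Q j = Q j * s i" unfolding Q_def by (rule comm_prod) (use ct in auto)
    have ca: "s i * a = a * s i" using assms(5)[of i] 3 ij by simp
    have "s i * alpha s a j = (s i * P j) * a * Q j" by (simp add: al mult.assoc)
    also have "\<dots> = P j * (s i * a) * Q j" by (simp add: cP mult.assoc)
    also have "\<dots> = P j * a * (s i * Q j)" by (simp add: ca mult.assoc)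
    moreover have "alpha_act s a i j = alpha s a j"
    proof -
      have "i \<noteq> j - 1" "i \<noteq> j" using 3 ij by linarith+
      then show ?thesis by (simp add: alpha_act_def)
    qed
    ultimately show ?thesis by (simp add: cQ al mult.assoc)
  next
    case 4
    have sp: "[1..<j] = [1..<i] @ [i, i+1] @ [i+2..<j]" using 4 ij by (intro split_upt) auto
    have c1: "s i * prod_list (map s (rev [i+2..<j])) = prod_list (map s (rev [i+2..<j])) * s i"
      by (rule comm_prod) (use 4 ij in \<open>auto intro!: comm\<close>)
    have c1': "s i * prod_list (map s [i+2..<j]) = prod_list (map s [i+2..<j]) * s i"
      by (rule comm_prod) (use 4 ij in \<open>auto intro!: comm\<close>)
    have c2: "s (i+1) * prod_list (map s (rev [1..<i])) = prod_list (map s (rev [1..<i])) * s (i+1)"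
      by (rule comm_prod) (use 4 ij in \<open>auto intro!: comm\<close>)
    have c2': "s (i+1) * prod_list (map s [1..<i]) = prod_list (map s [1..<i]) * s (i+1)"
      by (rule comm_prod) (use 4 ij in \<open>auto intro!: comm\<close>)
    have br: "s i * s (i+1) * s i = s (i+1) * s i * s (i+1)" using 4 ij by (intro braid) auto
    define A where "A = prod_list (map s (rev [i+2..<j]))"
    define B where "B = prod_list (map s (rev [1..<i]))"
    define C where "C = prod_list (map s [1..<i])"
    define D where "D = prod_list (map s [i+2..<j])"
    have Pj: "P j = A * (s (i+1) * s i) * B" using sp by (simp add: P_def A_def B_def mult.assoc)
    have Qj: "Q j = C * (s i * s (i+1)) * D" using sp by (simp add: Q_def C_def D_def mult.assoc)
    have sP: "s i * P j = P j * s (i+1)"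
    proof -
      have c: "s i * A = A * s i" using c1 by (simp add: A_def)
      have "s i * P j = (s i * A) * (s (i+1) * s i) * B" by (simp add: Pj mult.assoc)
      also have "\<dots> = A * (s i * s (i+1) * s i) * B" by (simp add: c mult.assoc)
      also have "\<dots> = A * (s (i+1) * s i * s (i+1)) * B" by (simp only: br)
      also have "\<dots> = A * (s (i+1) * s i) * (s (i+1) * B)" by (simp only: mult.assoc)
      also have "\<dots> = P j * s (i+1)" using c2 by (simp add: Pj B_def mult.assoc)
      finally show ?thesis .
    qed
    have sQ: "s (i+1) * Q j = Q j * s i"
    proof -
      have c: "s (i+1) * C = C * s (i+1)" using c2' by (simp add: C_def)
      have "s (i+1) * Q j = (s (i+1) * C) * (s i * s (i+1)) * D" by (simp add: Qj mult.assoc)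
      also have "\<dots> = (C * s (i+1)) * (s i * s (i+1)) * D" by (simp only: c)
      also have "\<dots> = C * (s (i+1) * s i * s (i+1)) * D" by (simp only: mult.assoc)
      also have "\<dots> = C * (s i * s (i+1) * s i) * D" by (simp only: br)
      also have "\<dots> = C * (s i * s (i+1)) * (s i * D)" by (simp only: mult.assoc)
      also have "\<dots> = Q j * s i" using c1' by (simp add: Qj D_def mult.assoc)
      finally show ?thesis .
    qed
    have ca: "s (i+1) * a = a * s (i+1)" by (rule assms(5)) (use 4 ij in linarith)+
    have "s i * alpha s a j = (s i * P j) * a * Q j" by (simp add: al mult.assoc)
    also have "\<dots> = P j * (s (i+1) * a) * Q j" by (simp only: sP mult.assoc)
    also have "\<dots> = P j * (a * s (i+1)) * Q j" by (simp only: ca)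
    also have "\<dots> = P j * a * (s (i+1) * Q j)" by (simp only: mult.assoc)
    also have "\<dots> = P j * a * (Q j * s i)" by (simp only: sQ)
    also have "\<dots> = alpha s a j * s i" by (simp add: al mult.assoc)
    moreover have "alpha_act s a i j = alpha s a j"
    proof -
      have "i \<noteq> j - 1" "i \<noteq> j" using 4 ij by linarith+
      then show ?thesis by (simp add: alpha_act_def)
    qed
    ultimately show ?thesis by simp
  qed
qed

end
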